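(* Let $\hat f$ be an estimator built from $Z_n$, and let $A$ be an attack with $x\in A(x)$ for all $x$. Assume $\mathbb E Y^2<\infty$ and the quantities below are finite. Define $T(\hat f)=\mathbb E\big[(\hat f(X)-Y)^2+\sup_{X'\in A(X)}(\hat f(X')-\hat f(X))^2\big]$ and $R_{A,2}(\hat f,f)=\mathbb E\sup_{X'\in A(X)}|\hat f(X')-f(X)|^2$, where expectations are over $Z_n$ and an independent test pair $(X,Y)$. Then $$\frac{T(\hat f)-\mathbb E|f(X)-Y|^2}{5}\le R_{A,2}(\hat f,f)\le2\big[T(\hat f)-\mathbb E|f(X)-Y|^2\big].$$
   Context: $(X,Y)$ is a random pair in $\mathbb R^d\times\mathbb R$, $Z_n$ is an i.i.d. sample of copies of $(X,Y)$ independent of $(X,Y)$, $f(x)=\mathbb E(Y\mid X=x)$, and an attack is a map $A$ assigning to each $x$ in the support $\Omega$ of $X$ a measurable set $A(x)\subseteq\Omega$. $T(\hat f)$ is the TRADES objective with squared loss and balancing parameter $1$. *)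

theory Defs
  imports "HOL-Probability.Probability"
begin

text \<open>D is the joint law of the test pair (X,Y) on R^d x R; S is the probability space
 carrying the training sample Z_n; an estimator is fh :: sample => R^d => real.\<close>

definition support_X :: "('a::metric_space \<times> real) measure \<Rightarrow> 'a set" where
  "support_X D = {x. \<forall>e>0. measure D (fst -` ball x e \<inter> space D) > 0}"

definition regression_fn :: "('a::topological_space \<times> real) measure \<Rightarrow> ('a \<Rightarrow> real) \<Rightarrow> bool" where
  "regression_fn D f \<longleftrightarrow> f \<in> borel_measurable borel \<and>
     (AE z in D. f (fst z) = real_cond_exp D (vimage_algebra (space D) fst borel) snd z)"

text \<open>TRADES objective with squared loss and balancing parameter 1.\<close>
definition TRADES :: "'s measure \<Rightarrow> ('a \<times> real) measure \<Rightarrow> ('s \<Rightarrow> 'a \<Rightarrow> real)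
    \<Rightarrow> ('a \<Rightarrow> 'a set) \<Rightarrow> real" where
  "TRADES S D fh A = (integral\<^sup>L (S \<Otimes>\<^sub>M D) (\<lambda>w.
      (fh (fst w) (fst (snd w)) - snd (snd w))^2
      + (SUP x'\<in>A (fst (snd w)). (fh (fst w) x' - fh (fst w) (fst (snd w)))^2)))"

definition adv_risk :: "'s measure \<Rightarrow> ('a \<times> real) measure \<Rightarrow> ('s \<Rightarrow> 'a \<Rightarrow> real)
    \<Rightarrow> ('a \<Rightarrow> 'a set) \<Rightarrow> ('a \<Rightarrow> real) \<Rightarrow> real" where
  "adv_risk S D fh A f = (integral\<^sup>L (S \<Otimes>\<^sub>M D) (\<lambda>w.
      (SUP x'\<in>A (fst (snd w)). \<bar>fh (fst w) x' - f (fst (snd w))\<bar>^2)))"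

end

theory Submission
  imports Defs
begin


lemma sq_int_mult:
  fixes a b :: "'x \<Rightarrow> real"
  assumes "a \<in> borel_measurable M" "b \<in> borel_measurable M"
    "integrable M (\<lambda>x. (a x)^2)" "integrable M (\<lambda>x. (b x)^2)"
  shows "integrable M (\<lambda>x. a x * b x)"
proof (rule Bochner_Integration.integrable_bound[where f="\<lambda>x. (a x)^2 + (b x)^2"])
  show "integrable M (\<lambda>x. (a x)^2 + (b x)^2)" using assms by auto
  show "(\<lambda>x. a x * b x) \<in> borel_measurable M" using assms by measurable
  have "\<And>u v::real. norm (u * v) \<le> norm (u^2 + v^2)"
  proof -
    fix u v :: real
    have "0 \<le> (\<bar>u\<bar> - \<bar>v\<bar>)^2" by simp
    then have "2 * \<bar>u * v\<bar> \<le> u^2 + v^2" by (simp add: power2_eq_square algebra_simps abs_mult)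
    then show "norm (u * v) \<le> norm (u^2 + v^2)" by simp
  qed
  then show "AE x in M. norm (a x * b x) \<le> norm ((a x)^2 + (b x)^2)" by simp
qed

lemma sq_int_diff:
  fixes a b :: "'x \<Rightarrow> real"
  assumes "a \<in> borel_measurable M" "b \<in> borel_measurable M"
    "integrable M (\<lambda>x. (a x)^2)" "integrable M (\<lambda>x. (b x)^2)"
  shows "integrable M (\<lambda>x. (a x - b x)^2)"
proof -
  have "integrable M (\<lambda>x. (a x)^2 - 2 * (a x * b x) + (b x)^2)"
    using assms sq_int_mult[OF assms] by auto
  then show ?thesis by (simp add: power2_diff algebra_simps)
qed

lemma support_null:
  fixes D :: "('a::{metric_space,second_countable_topology} \<times> real) measure"
  assumes "sets D = sets borel" "finite_measure D"
  shows "\<exists>N\<in>null_sets D. \<forall>z\<in>space D. fst z \<notin> support_X D \<longrightarrow> z \<in> N"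
proof -
  have "(\<lambda>x::'a\<times>real. fst x) \<in> borel_measurable borel"
    by (intro borel_measurable_continuous_onI continuous_intros)
  then have fm: "fst \<in> measurable D borel"
    by (subst measurable_cong_sets[OF assms(1) refl])
  define F where "F = {ball x e | x e. e > 0 \<and> measure D (fst -` ball x e \<inter> space D) = 0}"
  obtain F' where F': "F' \<subseteq> F" "countable F'" "\<Union>F' = \<Union>F"
    using Lindelof[of F] unfolding F_def by auto
  define N where "N = (\<Union>b\<in>F'. fst -` b \<inter> space D)"
  have "N \<in> null_sets D" unfolding N_def
  proof (rule null_sets_UN')
    show "countable F'" by fact
    fix b assume "b \<in> F'"
    then obtain x e where b: "b = ball x e" "measure D (fst -` ball x e \<inter> space D) = 0"
      using F' F_def by auto
    have ms: "fst -` b \<inter> space D \<in> sets D" using fm b by (auto intro: measurable_sets)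
    then show "fst -` b \<inter> space D \<in> null_sets D"
      using b finite_measure.emeasure_eq_measure[OF assms(2)] by (auto simp: null_sets_def)
  qed
  moreover have "\<forall>z\<in>space D. fst z \<notin> support_X D \<longrightarrow> z \<in> N"
  proof (intro ballI impI)
    fix z assume z: "z \<in> space D" "fst z \<notin> support_X D"
    then obtain e where e: "e > 0" "\<not> measure D (fst -` ball (fst z) e \<inter> space D) > 0"
      unfolding support_X_def by auto
    then have "measure D (fst -` ball (fst z) e \<inter> space D) = 0" using measure_nonneg
      by (metis less_eq_real_def)
    then have "ball (fst z) e \<in> F" using e unfolding F_def by auto
    then have "fst z \<in> \<Union>F" using e by (metis UnionI centre_in_ball)
    then have "fst z \<in> \<Union>F'" using F' by simp
    then show "z \<in> N" using z unfolding N_def by auto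
  qed
  ultimately show ?thesis by blast
qed

lemma distr_pair_snd':
  assumes "prob_space S" "sigma_finite_measure D"
  shows "distr (S \<Otimes>\<^sub>M D) D snd = D"
proof (intro measure_eqI)
  interpret S: prob_space S by fact
  interpret D: sigma_finite_measure D by fact
  fix A assume A: "A \<in> sets (distr (S \<Otimes>\<^sub>M D) D snd)"
  from A have "emeasure (distr (S \<Otimes>\<^sub>M D) D snd) A = emeasure (S \<Otimes>\<^sub>M D) (space S \<times> A)"
    by (auto simp add: emeasure_distr space_pair_measure dest: sets.sets_into_space intro!: arg_cong2[where f=emeasure])
  with A show "emeasure (distr (S \<Otimes>\<^sub>M D) D snd) A = emeasure D A"
    by (simp add: D.emeasure_pair_measure_Times S.emeasure_space_1)
qed simp

lemma D_facts:
  fixes D :: "('a::{metric_space,second_countable_topology} \<times> real) measure"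
  assumes "prob_space D" "sets D = sets borel" "regression_fn D f"
    "integrable D (\<lambda>z. (snd z)^2)"
  shows "integrable D (\<lambda>z. (f (fst z))^2)"
    "\<And>h. h \<in> borel_measurable borel \<Longrightarrow> integrable D (\<lambda>z. (h (fst z))^2) \<Longrightarrow>
       (\<integral>z. h (fst z) * (f (fst z) - snd z) \<partial>D) = 0"
proof -
  interpret prob_space D by fact
  define Fs where "Fs = vimage_algebra (space D) fst (borel :: 'a measure)"
  have "(\<lambda>x::'a\<times>real. fst x) \<in> borel_measurable borel"
    by (intro borel_measurable_continuous_onI continuous_intros)
  then have fm[measurable]: "fst \<in> measurable D borel"
    by (subst measurable_cong_sets[OF assms(2) refl])
  have "(\<lambda>x::'a\<times>real. snd x) \<in> borel_measurable borel"
    by (intro borel_measurable_continuous_onI continuous_intros)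
  then have sm[measurable]: "snd \<in> borel_measurable D"
    by (subst measurable_cong_sets[OF assms(2) refl])
  have subalg: "subalgebra D Fs" unfolding subalgebra_def Fs_def
    using sets_image_in_sets[OF refl fm] by simp
  interpret finite_measure_subalgebra D Fs
    by unfold_locales (rule subalg)
  have fb[measurable]: "f \<in> borel_measurable borel" and
    ae: "AE z in D. f (fst z) = real_cond_exp D Fs snd z"
    using assms(3) unfolding regression_fn_def Fs_def by auto
  have fFs: "fst \<in> measurable Fs borel" unfolding Fs_def
    by (rule measurable_vimage_algebra1) simp
  have Yint: "integrable D snd"
  proof (rule Bochner_Integration.integrable_bound[where f="\<lambda>z. 1 + (snd z)^2"])
    show "integrable D (\<lambda>z. 1 + (snd z)^2)" using assms(4) by auto
    have "\<And>u::real. norm u \<le> norm (1 + u^2)"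
    proof -
      fix u :: real
      have "0 \<le> (\<bar>u\<bar> - 1)^2" by simp
      then have "2 * \<bar>u\<bar> \<le> 1 + u^2" by (simp add: power2_diff)
      then show "norm u \<le> norm (1 + u^2)" by simp
    qed
    then show "AE z in D. norm (snd z) \<le> norm (1 + (snd z)^2)" by simp
  qed simp
  have J: "AE z in D. (real_cond_exp D Fs snd z)^2 \<le> real_cond_exp D Fs (\<lambda>z. (snd z)^2) z"
    using real_cond_exp_jensens_inequality(2)[OF Yint, of UNIV, where q=power2] assms(4)
      convex_power2 by auto
  show fint: "integrable D (\<lambda>z. (f (fst z))^2)"
  proof (rule Bochner_Integration.integrable_bound[where f="real_cond_exp D Fs (\<lambda>z. (snd z)^2)"])
    show "integrable D (real_cond_exp D Fs (\<lambda>z. (snd z)\<^sup>2))" using assms(4) by auto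
    show "AE z in D. norm ((f (fst z))^2) \<le> norm (real_cond_exp D Fs (\<lambda>z. (snd z)\<^sup>2) z)"
      using J ae by eventually_elim auto
  qed simp
  fix h :: "'a \<Rightarrow> real"
  assume hb[measurable]: "h \<in> borel_measurable borel" and hi: "integrable D (\<lambda>z. (h (fst z))^2)"
  have hFs: "(\<lambda>z. h (fst z)) \<in> borel_measurable Fs"
    using measurable_comp[OF fFs hb] by (simp add: comp_def)
  have i1: "integrable D (\<lambda>z. h (fst z) * snd z)"
    by (rule sq_int_mult) (use hi assms(4) in auto)
  have i2: "integrable D (\<lambda>z. h (fst z) * f (fst z))"
    by (rule sq_int_mult) (use hi fint in auto)
  have "(\<integral>z. h (fst z) * f (fst z) \<partial>D) = (\<integral>z. h (fst z) * real_cond_exp D Fs snd z \<partial>D)"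
    by (rule integral_cong_AE) (use ae in auto)
  also have "\<dots> = (\<integral>z. h (fst z) * snd z \<partial>D)"
    by (rule real_cond_exp_intg(2)[OF i1 hFs]) simp
  finally have eq: "(\<integral>z. h (fst z) * f (fst z) \<partial>D) = (\<integral>z. h (fst z) * snd z \<partial>D)" .
  have "(\<integral>z. h (fst z) * (f (fst z) - snd z) \<partial>D) =
      (\<integral>z. h (fst z) * f (fst z) - h (fst z) * snd z \<partial>D)"
    by (simp add: algebra_simps)
  also have "\<dots> = 0" using eq i1 i2 by simp
  finally show "(\<integral>z. h (fst z) * (f (fst z) - snd z) \<partial>D) = 0" .
qed

lemma sq_diff_le: "((u::real) - v)^2 \<le> 2 * u^2 + 2 * v^2"
proof -
  have "0 \<le> (u + v)^2" by simp
  then show ?thesis by (simp add: power2_diff power2_sum)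
qed

lemma pointwise:
  fixes g :: "'b \<Rightarrow> real"
  assumes x: "x \<in> B" and b1: "bdd_above ((\<lambda>x'. (g x' - g x)^2) ` B)"
    and b2: "bdd_above ((\<lambda>x'. \<bar>g x' - c\<bar>^2) ` B)"
  shows "(g x - c)^2 + (SUP x'\<in>B. (g x' - g x)^2) \<le> 5 * (SUP x'\<in>B. \<bar>g x' - c\<bar>^2)"
    "(SUP x'\<in>B. \<bar>g x' - c\<bar>^2) \<le> 2 * ((g x - c)^2 + (SUP x'\<in>B. (g x' - g x)^2))"
proof -
  define Q where "Q = (SUP x'\<in>B. \<bar>g x' - c\<bar>^2)"
  define P where "P = (SUP x'\<in>B. (g x' - g x)^2)"
  have ne: "B \<noteq> {}" using x by auto
  have q: "\<And>x'. x' \<in> B \<Longrightarrow> (g x' - c)^2 \<le> Q"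
    unfolding Q_def using cSUP_upper[OF _ b2] by simp
  have p: "\<And>x'. x' \<in> B \<Longrightarrow> (g x' - g x)^2 \<le> P"
    unfolding P_def using cSUP_upper[OF _ b1] by simp
  have a: "(g x - c)^2 \<le> Q" using q x .
  have "P \<le> 4 * Q" unfolding P_def
  proof (rule cSUP_least[OF ne])
    fix x' assume "x' \<in> B"
    have "(g x' - g x)^2 = ((g x' - c) - (g x - c))^2" by simp
    also have "\<dots> \<le> 2 * (g x' - c)^2 + 2 * (g x - c)^2" by (rule sq_diff_le)
    also have "\<dots> \<le> 4 * Q" using q[OF \<open>x' \<in> B\<close>] a by simp
    finally show "(g x' - g x)^2 \<le> 4 * Q" .
  qed
  then show "(g x - c)^2 + (SUP x'\<in>B. (g x' - g x)^2) \<le> 5 * (SUP x'\<in>B. \<bar>g x' - c\<bar>^2)"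
    using a unfolding P_def Q_def by simp
  have "Q \<le> 2 * ((g x - c)^2 + P)" unfolding Q_def
  proof (rule cSUP_least[OF ne])
    fix x' assume "x' \<in> B"
    have "\<bar>g x' - c\<bar>^2 = ((g x' - g x) - (c - g x))^2" by simp
    also have "\<dots> \<le> 2 * (g x' - g x)^2 + 2 * (c - g x)^2" by (rule sq_diff_le)
    also have "\<dots> \<le> 2 * ((g x - c)^2 + P)" using p[OF \<open>x' \<in> B\<close>]
      by (simp add: power2_commute)
    finally show "\<bar>g x' - c\<bar>^2 \<le> 2 * ((g x - c)^2 + P)" .
  qed
  then show "(SUP x'\<in>B. \<bar>g x' - c\<bar>^2) \<le> 2 * ((g x - c)^2 + (SUP x'\<in>B. (g x' - g x)^2))"
    unfolding P_def Q_def by simp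
qed

theorem mainTheorem13:
  fixes S :: "'s measure" and D :: "((real^'d) \<times> real) measure"
    and fh :: "'s \<Rightarrow> real^'d \<Rightarrow> real" and f :: "real^'d \<Rightarrow> real"
    and A :: "real^'d \<Rightarrow> (real^'d) set"
  assumes "prob_space S" and "prob_space D"
    and "sets D = sets borel"
    and "(\<lambda>(s, x). fh s x) \<in> borel_measurable (S \<Otimes>\<^sub>M borel)"
    and "integrable D (\<lambda>z. (snd z)^2)"
    and "regression_fn D f"
    and "\<forall>x\<in>support_X D. x \<in> A x \<and> A x \<subseteq> support_X D \<and> A x \<in> sets borel"
    and "integrable (S \<Otimes>\<^sub>M D) (\<lambda>w. (fh (fst w) (fst (snd w)) - snd (snd w))^2)"
    and "integrable (S \<Otimes>\<^sub>M D)
           (\<lambda>w. SUP x'\<in>A (fst (snd w)). (fh (fst w) x' - fh (fst w) (fst (snd w)))^2)"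
    and "integrable (S \<Otimes>\<^sub>M D)
           (\<lambda>w. SUP x'\<in>A (fst (snd w)). \<bar>fh (fst w) x' - f (fst (snd w))\<bar>^2)"
    and "AE w in S \<Otimes>\<^sub>M D.
           bdd_above ((\<lambda>x'. (fh (fst w) x' - fh (fst w) (fst (snd w)))^2) ` A (fst (snd w)))"
    and "AE w in S \<Otimes>\<^sub>M D.
           bdd_above ((\<lambda>x'. \<bar>fh (fst w) x' - f (fst (snd w))\<bar>^2) ` A (fst (snd w)))"
  shows "(TRADES S D fh A - (LINT z|D. \<bar>f (fst z) - snd z\<bar>^2)) / 5 \<le> adv_risk S D fh A f
       \<and> adv_risk S D fh A f \<le> 2 * (TRADES S D fh A - (LINT z|D. \<bar>f (fst z) - snd z\<bar>^2))"
proof -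
  note H = assms
  interpret S: prob_space S by fact
  interpret D: prob_space D by fact
  interpret P: pair_prob_space S D by (intro pair_prob_space.intro pair_sigma_finite.intro) (simp_all add: S.sigma_finite_measure_axioms D.sigma_finite_measure_axioms assms)
  define M where "M = S \<Otimes>\<^sub>M D"
  have "(\<lambda>x::(real^'d)\<times>real. fst x) \<in> borel_measurable borel"
    by (intro borel_measurable_continuous_onI continuous_intros)
  then have fm[measurable]: "fst \<in> measurable D borel"
    by (subst measurable_cong_sets[OF H(3) refl])
  have "(\<lambda>x::(real^'d)\<times>real. snd x) \<in> borel_measurable borel"
    by (intro borel_measurable_continuous_onI continuous_intros)
  then have sm[measurable]: "snd \<in> borel_measurable D"
    by (subst measurable_cong_sets[OF H(3) refl])
  have fb[measurable]: "f \<in> borel_measurable borel"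
    using H(6) unfolding regression_fn_def by auto
  have "(\<lambda>w. (fst w, fst (snd w))) \<in> measurable M (S \<Otimes>\<^sub>M borel)"
    unfolding M_def by measurable
  from measurable_comp[OF this H(4)]
  have Gm[measurable]: "(\<lambda>w. fh (fst w) (fst (snd w))) \<in> borel_measurable M"
    by (simp add: comp_def)
  have Fm[measurable]: "(\<lambda>w. f (fst (snd w))) \<in> borel_measurable M" unfolding M_def by measurable
  have Ym[measurable]: "(\<lambda>w. snd (snd w)) \<in> borel_measurable M" unfolding M_def by measurable
  have distr: "distr M D snd = D" unfolding M_def
    by (rule distr_pair_snd') (simp_all add: H D.sigma_finite_measure_axioms)
  have sndM: "snd \<in> measurable M D" unfolding M_def by simp
  have transfer: "integrable M (\<lambda>w. k (snd w)) \<and> (\<integral>w. k (snd w) \<partial>M) = (\<integral>z. k z \<partial>D)"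
    if "k \<in> borel_measurable D" "integrable D k" for k :: "_ \<Rightarrow> real"
  proof -
    have "integrable (distr M D snd) k" using that distr by simp
    then have "integrable M (\<lambda>w. k (snd w))"
      using integrable_distr_eq[OF sndM that(1)] by simp
    moreover have "(\<integral>w. k (snd w) \<partial>M) = (\<integral>z. k z \<partial>D)"
      using integral_distr[OF sndM that(1)] distr by simp
    ultimately show ?thesis by simp
  qed
  have fD: "integrable D (\<lambda>z. (f (fst z))^2)"
    using D_facts(1)[OF H(2,3,6,5)] .
  have iFYD: "integrable D (\<lambda>z. (f (fst z) - snd z)^2)"
    by (rule sq_int_diff) (use fD H(5) in auto)
  have iY2: "integrable M (\<lambda>w. (snd (snd w))^2)"
    using transfer[of "\<lambda>z. (snd z)^2"] H(5) by simp
  have iF2: "integrable M (\<lambda>w. (f (fst (snd w)))^2)"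
    using transfer[of "\<lambda>z. (f (fst z))^2"] fD by simp
  have FYt: "integrable M (\<lambda>w. (f (fst (snd w)) - snd (snd w))^2) \<and>
      (\<integral>w. (f (fst (snd w)) - snd (snd w))^2 \<partial>M) = (\<integral>z. (f (fst z) - snd z)^2 \<partial>D)"
    using transfer[of "\<lambda>z. (f (fst z) - snd z)^2"] iFYD by simp
  have iGY: "integrable M (\<lambda>w. (fh (fst w) (fst (snd w)) - snd (snd w))^2)"
    using H(8) unfolding M_def .
  have iG2: "integrable M (\<lambda>w. (fh (fst w) (fst (snd w)))^2)"
    using sq_int_diff[of "\<lambda>w. fh (fst w) (fst (snd w)) - snd (snd w)" M "\<lambda>w. - snd (snd w)"]
      iGY iY2 by simp
  have ia: "integrable M (\<lambda>w. (fh (fst w) (fst (snd w)) - f (fst (snd w)))^2)"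
    by (rule sq_int_diff) (use iG2 iF2 in auto)
  have ic: "integrable M (\<lambda>w. (fh (fst w) (fst (snd w)) - f (fst (snd w))) * (f (fst (snd w)) - snd (snd w)))"
    by (rule sq_int_mult) (use ia FYt in auto)
  have cross: "(\<integral>w. (fh (fst w) (fst (snd w)) - f (fst (snd w))) * (f (fst (snd w)) - snd (snd w)) \<partial>M) = 0"
  proof -
    have "(\<integral>w. (fh (fst w) (fst (snd w)) - f (fst (snd w))) * (f (fst (snd w)) - snd (snd w)) \<partial>M)
       = (\<integral>s. (\<integral>z. (fh s (fst z) - f (fst z)) * (f (fst z) - snd z) \<partial>D) \<partial>S)"
      using P.integral_fst'[OF ic[unfolded M_def]] by (simp add: M_def)
    also have "\<dots> = 0"
    proof (rule integral_eq_zero_AE)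
      show "AE s in S. (\<integral>z. (fh s (fst z) - f (fst z)) * (f (fst z) - snd z) \<partial>D) = 0"
        using P.AE_integrable_fst'[OF ia[unfolded M_def]] AE_space
      proof eventually_elim
        case (elim s)
        have hb: "(\<lambda>x. fh s x - f x) \<in> borel_measurable borel"
          using measurable_Pair2[OF H(4) elim(2)] fb by simp
        show ?case using D_facts(2)[OF H(2,3,6,5) hb] elim(1) by simp
      qed
    qed
    finally show ?thesis .
  qed
  have expand: "\<And>w. (fh (fst w) (fst (snd w)) - snd (snd w))^2 =
      (fh (fst w) (fst (snd w)) - f (fst (snd w)))^2 + (f (fst (snd w)) - snd (snd w))^2
      + 2 * ((fh (fst w) (fst (snd w)) - f (fst (snd w))) * (f (fst (snd w)) - snd (snd w)))"
    by (simp add: power2_eq_square algebra_simps)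
  have GYeq: "(\<integral>w. (fh (fst w) (fst (snd w)) - snd (snd w))^2 \<partial>M) =
      (\<integral>w. (fh (fst w) (fst (snd w)) - f (fst (snd w)))^2 \<partial>M) + (\<integral>z. (f (fst z) - snd z)^2 \<partial>D)"
    unfolding expand using ia FYt ic cross by simp
  define Pf where "Pf = (\<lambda>w::'s \<times> (real^'d) \<times> real. SUP x'\<in>A (fst (snd w)). (fh (fst w) x' - fh (fst w) (fst (snd w)))^2)"
  define Qf where "Qf = (\<lambda>w::'s \<times> (real^'d) \<times> real. SUP x'\<in>A (fst (snd w)). \<bar>fh (fst w) x' - f (fst (snd w))\<bar>^2)"
  define af where "af = (\<lambda>w::'s \<times> (real^'d) \<times> real. (fh (fst w) (fst (snd w)) - f (fst (snd w)))^2)"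
  have iP: "integrable M Pf" using H(9) unfolding Pf_def M_def .
  have iQ: "integrable M Qf" using H(10) unfolding Qf_def M_def .
  have ia': "integrable M af" using ia unfolding af_def .
  have TR: "TRADES S D fh A = (\<integral>w. (fh (fst w) (fst (snd w)) - snd (snd w))^2 \<partial>M) + integral\<^sup>L M Pf"
    unfolding TRADES_def M_def[symmetric] using Bochner_Integration.integral_add[OF iGY iP]
    by (simp add: Pf_def)
  have AR: "adv_risk S D fh A f = integral\<^sup>L M Qf"
    unfolding adv_risk_def M_def[symmetric] Qf_def ..
  have K: "TRADES S D fh A - (LINT z|D. \<bar>f (fst z) - snd z\<bar>^2) = integral\<^sup>L M af + integral\<^sup>L M Pf"
    unfolding TR GYeq af_def by simp
  obtain N where N: "N \<in> null_sets D" "\<forall>z\<in>space D. fst z \<notin> support_X D \<longrightarrow> z \<in> N"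
    using support_null[OF H(3)] D.finite_measure_axioms by blast
  have AEsupp: "AE w in M. fst (snd w) \<in> support_X D"
  proof (rule AE_I'[of "space S \<times> N"])
    have "space S \<times> N \<in> sets M" unfolding M_def using N(1) by auto
    moreover have "emeasure M (space S \<times> N) = 0" unfolding M_def
      using N(1) D.emeasure_pair_measure_Times[OF sets.top[of S], of N] by (simp add: null_sets_def)
    ultimately show "space S \<times> N \<in> null_sets M" by (simp add: null_sets_def)
    show "{w \<in> space M. fst (snd w) \<notin> support_X D} \<subseteq> space S \<times> N"
      using N(2) unfolding M_def by (auto simp: space_pair_measure)
  qed
  have AEpw: "AE w in M. af w + Pf w \<le> 5 * Qf w \<and> Qf w \<le> 2 * (af w + Pf w)"
    using AEsupp H(11,12)[folded M_def]
  proof eventually_elim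
    case (elim w)
    have x: "fst (snd w) \<in> A (fst (snd w))" using elim(1) H(7) by auto
    show ?case unfolding af_def Pf_def Qf_def
      using pointwise[OF x elim(2) elim(3)] by simp
  qed
  have I1: "integral\<^sup>L M af + integral\<^sup>L M Pf \<le> 5 * integral\<^sup>L M Qf"
  proof -
    have "integral\<^sup>L M af + integral\<^sup>L M Pf = (\<integral>w. af w + Pf w \<partial>M)" using ia' iP by simp
    also have "\<dots> \<le> (\<integral>w. 5 * Qf w \<partial>M)"
      by (rule integral_mono_AE) (use ia' iP iQ AEpw in auto)
    also have "\<dots> = 5 * integral\<^sup>L M Qf" by simp
    finally show ?thesis .
  qed
  have I2: "integral\<^sup>L M Qf \<le> 2 * (integral\<^sup>L M af + integral\<^sup>L M Pf)"
  proof -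
    have "integral\<^sup>L M Qf \<le> (\<integral>w. 2 * (af w + Pf w) \<partial>M)"
      by (rule integral_mono_AE) (use ia' iP iQ AEpw in auto)
    also have "\<dots> = 2 * (integral\<^sup>L M af + integral\<^sup>L M Pf)" using ia' iP by simp
    finally show ?thesis .
  qed
  show ?thesis unfolding K AR using I1 I2 by simp
qed

end
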